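(* For every finite set $\Xi\subset\mathbb{F}^2$ of distinct points, the Maximal Cartesian Subset Construction procedure described in the context (for any admissible choices made in step 3) terminates after finitely many iterations, and the set $\Xi'$ it returns is a maximal cartesian subset of $\Xi$, i.e. $\Xi'$ is cartesian and there is no cartesian subset $\Xi''\subseteq\Xi$ with $\Xi'\subsetneq\Xi''$.
   Context: $\mathbb{F}$ is a field. A finite set $\mathcal{A}\subset\mathbb{N}_0^2$ is a lower set if with each $(\alpha_1,\alpha_2)$ it contains all $(\alpha_1',\alpha_2')\in\mathbb{N}_0^2$ with $\alpha_1'\le\alpha_1,\alpha_2'\le\alpha_2$. A finite set of distinct points is cartesian if it equals $\{(x_i,y_j):(i,j)\in\mathcal{A}\}$ for a lower set $\mathcal{A}$, pairwise distinct $x_i$ and pairwise distinct $y_j$. $S_x(\Xi)$: with horizontal lines through points of $\Xi$ (one per distinct ordinate) numbered $l^x_0,\dots,l^x_\nu$ so that $l^x_j$ contains $m_j+1$ points and $m_0\ge\cdots\ge m_\nu$, $S_x(\Xi)=\{(i,j):0\le j\le\nu,0\le i\le m_j\}$; $S_y(\Xi)$ is defined symmetrically with vertical lines. A maximal row subset of $\Xi$ is a non-empty set of the form $\Xi\cap\ell$ for a horizontal line $\ell$. Procedure: start with $\Xi'=\emptyset$ and the working set equal to the input $\Xi$. (1) If the working set $\Xi$ is empty, return $\Xi'$. (2) If $S_x(\Xi)=S_y(\Xi)$, replace $\Xi'$ by $\Xi'\cup\Xi$ and return $\Xi'$. (3) Otherwise choose a maximal row subset $A$ of the current $\Xi$ of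 maximal cardinality; remove from $\Xi$ all points of $A$ and all points whose abscissa differs from every abscissa of the points of $A$; replace $\Xi'$ by $\Xi'\cup A$; go to (1). The returned $\Xi'$ is compared against subsets of the original input set. *)

theory Defs
  imports Main "HOL-Library.Multiset"
begin

text \<open>Points of F^2 are pairs; fst = abscissa, snd = ordinate.\<close>

definition lower_set :: "(nat \<times> nat) set \<Rightarrow> bool" where
  "lower_set A \<longleftrightarrow> finite A \<and>
     (\<forall>a1 a2 b1 b2. (a1, a2) \<in> A \<and> b1 \<le> a1 \<and> b2 \<le> a2 \<longrightarrow> (b1, b2) \<in> A)"

definition cartesian :: "('a \<times> 'a) set \<Rightarrow> bool" where
  "cartesian \<Xi> \<longleftrightarrow> (\<exists>A (x :: nat \<Rightarrow> 'a) (y :: nat \<Rightarrow> 'a).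
      lower_set A \<and> inj_on x (fst ` A) \<and> inj_on y (snd ` A) \<and>
      \<Xi> = (\<lambda>(i, j). (x i, y j)) ` A)"

text \<open>Numbers of points on the horizontal lines (rows), in non-increasing order:
  the j-th entry is m_j + 1.\<close>
definition row_counts :: "('a \<times> 'a) set \<Rightarrow> nat list" where
  "row_counts \<Xi> = rev (sorted_list_of_multiset
      (image_mset (\<lambda>c. card {p \<in> \<Xi>. snd p = c}) (mset_set (snd ` \<Xi>))))"

definition col_counts :: "('a \<times> 'a) set \<Rightarrow> nat list" where
  "col_counts \<Xi> = rev (sorted_list_of_multiset
      (image_mset (\<lambda>c. card {p \<in> \<Xi>. fst p = c}) (mset_set (fst ` \<Xi>))))"

definition S_x :: "('a \<times> 'a) set \<Rightarrow> (nat \<times> nat) set" where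
  "S_x \<Xi> = {(i, j). j < length (row_counts \<Xi>) \<and> i < row_counts \<Xi> ! j}"

definition S_y :: "('a \<times> 'a) set \<Rightarrow> (nat \<times> nat) set" where
  "S_y \<Xi> = {(i, j). i < length (col_counts \<Xi>) \<and> j < col_counts \<Xi> ! i}"

definition maximal_row_subset :: "('a \<times> 'a) set \<Rightarrow> ('a \<times> 'a) set \<Rightarrow> bool" where
  "maximal_row_subset \<Xi> A \<longleftrightarrow> A \<noteq> {} \<and> (\<exists>c. A = {p \<in> \<Xi>. snd p = c})"

text \<open>States of the procedure: (current output \<Xi>', working set \<Xi>).\<close>
definition mcs_final :: "('a \<times> 'a) set \<times> ('a \<times> 'a) set \<Rightarrow> bool" where
  "mcs_final s \<longleftrightarrow> snd s = {} \<or> S_x (snd s) = S_y (snd s)"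

definition mcs_output :: "('a \<times> 'a) set \<times> ('a \<times> 'a) set \<Rightarrow> ('a \<times> 'a) set" where
  "mcs_output s = (if snd s = {} then fst s else fst s \<union> snd s)"

text \<open>Step (3), with any admissible choice of A.\<close>
definition mcs_step :: "('a \<times> 'a) set \<times> ('a \<times> 'a) set \<Rightarrow> ('a \<times> 'a) set \<times> ('a \<times> 'a) set \<Rightarrow> bool" where
  "mcs_step s t \<longleftrightarrow> \<not> mcs_final s \<and>
     (\<exists>A. maximal_row_subset (snd s) A \<and>
          (\<forall>B. maximal_row_subset (snd s) B \<longrightarrow> card B \<le> card A) \<and>
          t = (fst s \<union> A, {p \<in> snd s. p \<notin> A \<and> fst p \<in> fst ` A}))"

definition maximal_cartesian_subset :: "('a \<times> 'a) set \<Rightarrow> ('a \<times> 'a) set \<Rightarrow> bool" where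
  "maximal_cartesian_subset \<Xi> R \<longleftrightarrow> R \<subseteq> \<Xi> \<and> cartesian R \<and>
     \<not> (\<exists>R'. R' \<subseteq> \<Xi> \<and> cartesian R' \<and> R \<subset> R')"

end

theory Submission
  imports Defs
begin

definition rowset :: "('a \<times> 'a) set \<Rightarrow> 'a \<Rightarrow> 'a set" where
  "rowset S c = {x. (x, c) \<in> S}"
definition colset :: "('a \<times> 'a) set \<Rightarrow> 'a \<Rightarrow> 'a set" where
  "colset S a = {y. (a, y) \<in> S}"
definition rchain :: "('a \<times> 'a) set \<Rightarrow> bool" where
  "rchain S \<longleftrightarrow> (\<forall>c d. rowset S c \<subseteq> rowset S d \<or> rowset S d \<subseteq> rowset S c)"

lemma cart_chain:
  assumes "cartesian S" shows "rchain S"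
proof -
  obtain A and x :: "nat \<Rightarrow> 'a" and y :: "nat \<Rightarrow> 'a" where L: "lower_set A"
    and S: "S = (\<lambda>(i, j). (x i, y j)) ` A" using assms unfolding cartesian_def by blast
  show ?thesis unfolding rchain_def
  proof (rule ccontr)
    assume "\<not> (\<forall>c d. rowset S c \<subseteq> rowset S d \<or> rowset S d \<subseteq> rowset S c)"
    then obtain c d a b where a: "(a,c) \<in> S" "(a,d) \<notin> S" and b: "(b,d) \<in> S" "(b,c) \<notin> S"
      unfolding rowset_def by blast
    from a(1) S obtain i j where ij: "(i,j) \<in> A" "a = x i" "c = y j" by auto
    from b(1) S obtain i' j' where ij': "(i',j') \<in> A" "b = x i'" "d = y j'" by auto
    show False
    proof (cases "i \<le> i'")
      case True
      with L ij' have "(i, j') \<in> A" unfolding lower_set_def by blast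
      then have "(a, d) \<in> S" using S ij ij' by force
      with a show False by simp
    next
      case False
      with L ij have "(i', j) \<in> A" unfolding lower_set_def by (meson nat_le_linear order_refl)
      then have "(b, c) \<in> S" using S ij ij' by force
      with b show False by simp
    qed
  qed
qed

lemma col_chain:
  assumes "rchain S" shows "colset S a \<subseteq> colset S b \<or> colset S b \<subseteq> colset S a"
  using assms unfolding rchain_def rowset_def colset_def by blast

lemma chain_card_sub:
  assumes "finite T" "S \<subseteq> T \<or> T \<subseteq> S" "card T \<le> card S" shows "T \<subseteq> S"
  using assms by (metis card_seteq)

lemma sorted_list_ex:
  fixes f :: "'b \<Rightarrow> nat"
  assumes "finite X"
  shows "\<exists>zs. distinct zs \<and> set zs = X \<and>
     rev (sorted_list_of_multiset (image_mset f (mset_set X))) = map f zs \<and>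
     (\<forall>i j. i \<le> j \<longrightarrow> j < length zs \<longrightarrow> f (zs!j) \<le> f (zs!i))"
proof -
  obtain xs where xs: "distinct xs" "set xs = X" using assms finite_distinct_list by blast
  have "sort (map f xs) = map f (sort_key f xs)"
    by (rule properties_for_sort) (simp_all)
  then have e: "rev (sorted_list_of_multiset (image_mset f (mset_set X))) = map f (rev (sort_key f xs))"
  proof -
    have "image_mset f (mset_set X) = mset (map f xs)" using xs mset_set_set[OF xs(1)] by simp
    then show ?thesis using \<open>sort (map f xs) = map f (sort_key f xs)\<close>
      by (simp only: sorted_list_of_multiset_mset rev_map)
  qed
  have s: "sorted (map f (sort_key f xs))" by simp
  show ?thesis
  proof (intro exI conjI allI impI)
    show "distinct (rev (sort_key f xs))" using xs by simp
    show "set (rev (sort_key f xs)) = X" using xs by simp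
    show "rev (sorted_list_of_multiset (image_mset f (mset_set X))) = map f (rev (sort_key f xs))" by (rule e)
  next
    fix i j assume ij: "i \<le> j" "j < length (rev (sort_key f xs))"
    let ?n = "length xs"
    have "f (sort_key f xs ! (?n - 1 - j)) \<le> f (sort_key f xs ! (?n - 1 - i))"
      using sorted_nth_mono[OF s, of "?n - 1 - j" "?n - 1 - i"] ij by simp
    then show "f (rev (sort_key f xs) ! j) \<le> f (rev (sort_key f xs) ! i)"
      using ij by (simp add: rev_nth)
  qed
qed

lemma chain_cart:
  assumes fin: "finite S" and ch: "rchain S" shows "cartesian S"
proof -
  let ?fc = "\<lambda>a. card (colset S a)" and ?fr = "\<lambda>c. card (rowset S c)"
  have fX: "finite (fst ` S)" "finite (snd ` S)" using fin by auto
  obtain xs where xs: "distinct xs" "set xs = fst ` S"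
    "\<forall>i j. i \<le> j \<longrightarrow> j < length xs \<longrightarrow> ?fc (xs!j) \<le> ?fc (xs!i)"
    using sorted_list_ex[OF fX(1), of ?fc] by blast
  obtain ys where ys: "distinct ys" "set ys = snd ` S"
    "\<forall>i j. i \<le> j \<longrightarrow> j < length ys \<longrightarrow> ?fr (ys!j) \<le> ?fr (ys!i)"
    using sorted_list_ex[OF fX(2), of ?fr] by blast
  have finr: "finite (rowset S c)" for c
  proof -
    have "rowset S c \<subseteq> fst ` S" unfolding rowset_def by force
    then show ?thesis using fX finite_subset by blast
  qed
  have finc: "finite (colset S a)" for a
  proof -
    have "colset S a \<subseteq> snd ` S" unfolding colset_def by force
    then show ?thesis using fX finite_subset by blast
  qed
  define A where "A = {(i,j). i < length xs \<and> j < length ys \<and> (xs!i, ys!j) \<in> S}"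
  have low: "lower_set A"
    unfolding lower_set_def
  proof (intro conjI allI impI)
    show "finite A"
      by (rule finite_subset[of _ "{..<length xs} \<times> {..<length ys}"]) (auto simp: A_def)
  next
    fix a1 a2 b1 b2 assume h: "(a1, a2) \<in> A \<and> b1 \<le> a1 \<and> b2 \<le> a2"
    then have h1: "a1 < length xs" "a2 < length ys" "(xs!a1, ys!a2) \<in> S" "b1 \<le> a1" "b2 \<le> a2"
      by (auto simp: A_def)
    have "rowset S (ys!a2) \<subseteq> rowset S (ys!b2)"
      using chain_card_sub[of "rowset S (ys!a2)" "rowset S (ys!b2)"] finr ch ys(3) h1 unfolding rchain_def by blast
    then have "(xs!a1, ys!b2) \<in> S" using h1 unfolding rowset_def by blast
    moreover have "colset S (xs!a1) \<subseteq> colset S (xs!b1)"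
      using chain_card_sub[of "colset S (xs!a1)" "colset S (xs!b1)"] finc col_chain[OF ch] xs(3) h1 by blast
    ultimately have "(xs!b1, ys!b2) \<in> S" unfolding colset_def by blast
    then show "(b1, b2) \<in> A" using h1 by (simp add: A_def)
  qed
  have inj1: "inj_on ((!) xs) (fst ` A)"
    by (rule inj_on_nth[OF xs(1)]) (auto simp: A_def)
  have inj2: "inj_on ((!) ys) (snd ` A)"
    by (rule inj_on_nth[OF ys(1)]) (auto simp: A_def)
  have eq: "S = (\<lambda>(i, j). (xs!i, ys!j)) ` A"
  proof
    show "S \<subseteq> (\<lambda>(i, j). (xs!i, ys!j)) ` A"
    proof
      fix p assume p: "p \<in> S"
      obtain a b where ab: "p = (a,b)" by (cases p)
      have "a \<in> set xs" "b \<in> set ys" using p ab xs ys by force+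
      then obtain i j where "i < length xs" "xs!i = a" "j < length ys" "ys!j = b"
        by (metis in_set_conv_nth)
      then show "p \<in> (\<lambda>(i, j). (xs!i, ys!j)) ` A"
        using p ab by (auto simp: A_def image_iff intro!: bexI[of _ "(i,j)"])
    qed
    show "(\<lambda>(i, j). (xs!i, ys!j)) ` A \<subseteq> S" by (auto simp: A_def)
  qed
  show ?thesis unfolding cartesian_def using low inj1 inj2 eq by blast
qed

lemma card_tri: fixes n :: nat and f :: "nat \<Rightarrow> nat" shows "card {(i,j). j < n \<and> i < (f j::nat)} = (\<Sum>j<n. f j)"
proof -
  have "{(i,j). j < n \<and> i < f j} = (\<lambda>(j,i). (i,j)) ` (SIGMA j:{..<n}. {..<f j})" by auto
  moreover have "inj_on (\<lambda>(j,i). (i::nat,j::nat)) (SIGMA j:{..<n}. {..<f j})" by (auto simp: inj_on_def)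
  ultimately show ?thesis by (simp add: card_image)
qed

lemma card_tri2: fixes n :: nat and f :: "nat \<Rightarrow> nat" shows "card {(i,j). i < n \<and> j < (f i::nat)} = (\<Sum>i<n. f i)"
proof -
  have "{(i,j). i < n \<and> j < f i} = (SIGMA i:{..<n}. {..<f i})" by auto
  then show ?thesis by (simp add: card_SigmaI)
qed

lemma card_row: "card {p\<in>W. snd p = e} = card (rowset W e)"
proof -
  have "{p\<in>W. snd p = e} = (\<lambda>x. (x,e)) ` rowset W e" unfolding rowset_def by force
  moreover have "inj_on (\<lambda>x. (x,e)) (rowset W e)" by (auto simp: inj_on_def)
  ultimately show ?thesis by (simp add: card_image)
qed

lemma sum_nth_set:
  assumes "distinct zs" "k \<le> length zs"
  shows "(\<Sum>i<k. g (zs!i)) = (\<Sum>a\<in>set (take k zs). g a)"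
proof -
  have "set (take k zs) = (!) zs ` {..<k}" using nth_image[OF assms(2)] by (simp add: lessThan_atLeast0)
  moreover have "inj_on ((!) zs) {..<k}" using assms by (intro inj_on_nth) auto
  ultimately show ?thesis by (simp add: sum.reindex)
qed

lemma sxsy_chain:
  fixes W :: "('a \<times> 'a) set"
  assumes fin: "finite W" and eq: "S_x W = S_y W"
  shows "rchain W"
proof -
  define rs where "rs = (\<lambda>c. card {p \<in> W. snd p = c})"
  define cs where "cs = (\<lambda>c. card {p \<in> W. fst p = c})"
  have fX: "finite (fst ` W)" "finite (snd ` W)" using fin by auto
  obtain ws where ws: "distinct ws" "set ws = snd ` W" "row_counts W = map rs ws"
    using sorted_list_ex[OF fX(2), of rs] unfolding row_counts_def rs_def by blast
  obtain zs where zs: "distinct zs" "set zs = fst ` W" "col_counts W = map cs zs"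
    using sorted_list_ex[OF fX(1), of cs] unfolding col_counts_def cs_def by blast
  have finr: "finite (rowset W c)" for c
  proof -
    have "rowset W c \<subseteq> fst ` W" unfolding rowset_def by force
    then show ?thesis using fX finite_subset by blast
  qed
  have key: "rowset W d \<subseteq> rowset W e" if d: "d \<in> snd ` W" and de: "rs d \<le> rs e" for d e
  proof -
    define k where "k = rs d"
    have rsr: "rs c = card (rowset W c)" for c unfolding rs_def by (rule card_row)
    have "rowset W d \<subseteq> fst ` W" unfolding rowset_def by force
    then have "k \<le> card (fst ` W)" unfolding k_def rsr using fX card_mono by blast
    then have klen: "k \<le> length zs" using zs distinct_card by metis
    define T where "T = set (take k zs)"
    have cT: "card T = k" unfolding T_def using zs(1) klen by (simp add: distinct_card)
    have finT: "finite T" unfolding T_def by simp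
    have sx: "S_x W \<inter> {(i,j). i<k} = {(i,j). j < length ws \<and> i < min (rs (ws!j)) k}"
      unfolding S_x_def ws by auto
    have E1: "card (S_x W \<inter> {(i,j). i<k}) = (\<Sum>j<length ws. min (rs (ws!j)) k)"
      unfolding sx by (rule card_tri)
    have E1': "(\<Sum>j<length ws. min (rs (ws!j)) k) = (\<Sum>c\<in>snd ` W. min (rs c) k)"
      using sum_nth_set[OF ws(1) order_refl, of "\<lambda>c. min (rs c) k"] ws(2) by simp
    have sy: "S_y W \<inter> {(i,j). i<k} = {(i,j). i < k \<and> j < cs (zs!i)}"
      unfolding S_y_def zs using klen by auto
    have E2: "card (S_y W \<inter> {(i,j). i<k}) = (\<Sum>i<k. cs (zs!i))"
      unfolding sy by (rule card_tri2)
    have E2': "(\<Sum>i<k. cs (zs!i)) = (\<Sum>a\<in>T. cs a)"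
      unfolding T_def by (rule sum_nth_set[OF zs(1) klen])
    have E3: "(\<Sum>a\<in>T. cs a) = card {p\<in>W. fst p \<in> T}"
    proof -
      have "{p\<in>W. fst p \<in> T} = (\<Union>a\<in>T. {p\<in>W. fst p = a})" by auto
      moreover have "card (\<Union>a\<in>T. {p\<in>W. fst p = a}) = (\<Sum>a\<in>T. card {p\<in>W. fst p = a})"
        by (rule card_UN_disjoint) (use finT fin in auto)
      ultimately show ?thesis unfolding cs_def by simp
    qed
    have E4: "card {p\<in>W. fst p \<in> T} = (\<Sum>c\<in>snd ` W. card (rowset W c \<inter> T))"
    proof -
      have "{p\<in>W. fst p \<in> T} = (\<Union>c\<in>snd ` W. {p\<in>W. fst p \<in> T \<and> snd p = c})" by auto
      moreover have "card (\<Union>c\<in>snd ` W. {p\<in>W. fst p \<in> T \<and> snd p = c})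
          = (\<Sum>c\<in>snd ` W. card {p\<in>W. fst p \<in> T \<and> snd p = c})"
        by (rule card_UN_disjoint) (use fX fin in auto)
      moreover have "card {p\<in>W. fst p \<in> T \<and> snd p = c} = card (rowset W c \<inter> T)" for c
      proof -
        have "{p\<in>W. fst p \<in> T \<and> snd p = c} = (\<lambda>x. (x,c)) ` (rowset W c \<inter> T)"
          unfolding rowset_def by force
        moreover have "inj_on (\<lambda>x. (x,c)) (rowset W c \<inter> T)" by (auto simp: inj_on_def)
        ultimately show ?thesis by (simp add: card_image)
      qed
      ultimately show ?thesis by simp
    qed
    have le: "\<forall>c\<in>snd ` W. card (rowset W c \<inter> T) \<le> min (rs c) k"
    proof
      fix c
      have "card (rowset W c \<inter> T) \<le> card (rowset W c)" using finr by (intro card_mono) auto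
      moreover have "card (rowset W c \<inter> T) \<le> card T" using finT by (intro card_mono) auto
      ultimately show "card (rowset W c \<inter> T) \<le> min (rs c) k" using cT rsr by simp
    qed
    have sumeq: "(\<Sum>c\<in>snd ` W. card (rowset W c \<inter> T)) = (\<Sum>c\<in>snd ` W. min (rs c) k)"
      using E1 E1' E2 E2' E3 E4 eq by simp
    have all: "\<forall>c\<in>snd ` W. card (rowset W c \<inter> T) = min (rs c) k"
    proof (rule ccontr)
      assume "\<not> ?thesis"
      then obtain c where "c \<in> snd ` W" "card (rowset W c \<inter> T) < min (rs c) k"
        using le le_neq_implies_less by blast
      then have "(\<Sum>c\<in>snd ` W. card (rowset W c \<inter> T)) < (\<Sum>c\<in>snd ` W. min (rs c) k)"
        using sum_strict_mono_ex1[OF fX(2) le] by blast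
      with sumeq show False by simp
    qed
    have "k \<ge> 1"
    proof -
      from d obtain p where "p \<in> W" "snd p = d" by auto
      then have "fst p \<in> rowset W d" unfolding rowset_def by (cases p) auto
      then show ?thesis unfolding k_def rsr using finr[of d] card_0_eq[of "rowset W d"] by fastforce
    qed
    have eD: "e \<in> snd ` W"
    proof (rule ccontr)
      assume "e \<notin> snd ` W"
      then have "rowset W e = {}" unfolding rowset_def by force
      then show False using de \<open>k \<ge> 1\<close> unfolding k_def rsr by simp
    qed
    have "card (rowset W d \<inter> T) = min (rs d) k" using all d by blast
    then have "card (rowset W d \<inter> T) = card (rowset W d)" unfolding k_def rsr by simp
    then have s1: "rowset W d \<subseteq> T"
      by (metis card_subset_eq finr inf_le1 inf.absorb_iff1)
    have "card (rowset W e \<inter> T) = min (rs e) k" using all eD by blast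
    then have "card (rowset W e \<inter> T) = card T" using de cT unfolding k_def by simp
    then have s2: "T \<subseteq> rowset W e"
      by (metis card_subset_eq finT inf_le2 inf.absorb_iff2)
    show ?thesis using s1 s2 by blast
  qed
  show ?thesis unfolding rchain_def
  proof (intro allI)
    fix c d
    show "rowset W c \<subseteq> rowset W d \<or> rowset W d \<subseteq> rowset W c"
    proof (cases "c \<in> snd ` W \<and> d \<in> snd ` W")
      case True
      then show ?thesis using key[of c d] key[of d c] by linarith
    next
      case False
      then have "rowset W c = {} \<or> rowset W d = {}" unfolding rowset_def by force
      then show ?thesis by blast
    qed
  qed
qed

definition invar :: "('a \<times> 'a) set \<Rightarrow> ('a \<times> 'a) set \<Rightarrow> ('a \<times> 'a) set \<Rightarrow> bool" where
  "invar X P W \<longleftrightarrow> P \<union> W \<subseteq> X \<and> (\<forall>p\<in>P. \<forall>q\<in>W. snd p \<noteq> snd q) \<and> rchain P \<and>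
     (\<forall>c d. c \<in> snd ` P \<longrightarrow> rowset W d \<subseteq> rowset P c) \<and>
     (\<forall>R. R \<subseteq> X \<and> rchain R \<and> P \<subseteq> R \<longrightarrow> R \<subseteq> P \<union> W)"

lemma invar_init: "invar X {} X"
proof -
  have "rchain {}" unfolding rchain_def rowset_def by simp
  then show ?thesis unfolding invar_def by blast
qed

lemma rowset_Un: "rowset (P \<union> Q) c = rowset P c \<union> rowset Q c"
  unfolding rowset_def by auto

lemma invar_step:
  assumes fin: "finite X" and I: "invar X P W" and st: "mcs_step (P, W) t"
  shows "invar X (fst t) (snd t)"
proof -
  from st have "\<exists>A. maximal_row_subset W A \<and>
          (\<forall>B. maximal_row_subset W B \<longrightarrow> card B \<le> card A) \<and>
          t = (P \<union> A, {p \<in> W. p \<notin> A \<and> fst p \<in> fst ` A})"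
    unfolding mcs_step_def by (simp only: fst_conv snd_conv)
  then obtain A where AA: "maximal_row_subset W A \<and>
          (\<forall>B. maximal_row_subset W B \<longrightarrow> card B \<le> card A) \<and>
          t = (P \<union> A, {p \<in> W. p \<notin> A \<and> fst p \<in> fst ` A})" ..
  note mA = AA[THEN conjunct1] and maxA = AA[THEN conjunct2, THEN conjunct1]
    and t = AA[THEN conjunct2, THEN conjunct2]
  note mA' = mA[unfolded maximal_row_subset_def]
  note Ane = mA'[THEN conjunct1]
  from mA'[THEN conjunct2] obtain c where Ac: "A = {p \<in> W. snd p = c}" ..
  define W' where "W' = {p \<in> W. p \<notin> A \<and> fst p \<in> fst ` A}"
  note II = I[unfolded invar_def]
  note sub = II[THEN conjunct1] and dis = II[THEN conjunct2, THEN conjunct1]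
    and chP = II[THEN conjunct2, THEN conjunct2, THEN conjunct1]
    and cross = II[THEN conjunct2, THEN conjunct2, THEN conjunct2, THEN conjunct1]
    and mx = II[THEN conjunct2, THEN conjunct2, THEN conjunct2, THEN conjunct2]
  have finW: "finite W" using sub fin finite_subset by blast
  have fstA: "fst ` A = rowset W c"
  proof
    show "fst ` A \<subseteq> rowset W c" unfolding Ac rowset_def by auto
    show "rowset W c \<subseteq> fst ` A"
    proof
      fix x assume "x \<in> rowset W c"
      then have "(x, c) \<in> A" unfolding Ac rowset_def by simp
      then show "x \<in> fst ` A" by (rule image_eqI[rotated]) simp
    qed
  qed
  have rA: "rowset A e = (if e = c then rowset W c else {})" for e
    unfolding Ac rowset_def by auto
  have cW: "c \<in> snd ` W" using Ane Ac by auto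
  have cP: "c \<notin> snd ` P"
  proof
    assume "c \<in> snd ` P"
    then obtain p where p: "p \<in> P" "snd p = c" by (rule imageE) simp
    obtain q where q: "q \<in> W" "snd q = c" using cW by (rule imageE) simp
    have "snd p \<noteq> snd q" using dis p(1) q(1) by simp
    then show False using p(2) q(2) by simp
  qed
  have rPc: "rowset P c = {}"
  proof (rule ccontr)
    assume "rowset P c \<noteq> {}"
    then obtain x where "(x, c) \<in> P" unfolding rowset_def by blast
    then have "c \<in> snd ` P" by (rule image_eqI[rotated]) simp
    with cP show False by simp
  qed
  have rP': "rowset (P \<union> A) e = (if e = c then rowset W c else rowset P e)" for e
    using rA rPc by (simp add: rowset_Un)
  have rW': "rowset W' d \<subseteq> rowset W d \<inter> rowset W c" for d
    unfolding W'_def fstA rowset_def by auto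
  have finr: "finite (rowset W e)" for e
  proof -
    have "rowset W e \<subseteq> fst ` W"
    proof
      fix x assume "x \<in> rowset W e"
      then have "(x, e) \<in> W" unfolding rowset_def by simp
      then show "x \<in> fst ` W" by (rule image_eqI[rotated]) simp
    qed
    then show ?thesis using finW finite_subset by blast
  qed
  have "invar X (P \<union> A) W'"
    unfolding invar_def
  proof (intro conjI allI impI ballI)
    have "A \<subseteq> W" "W' \<subseteq> W" unfolding Ac W'_def by blast+
    then show "P \<union> A \<union> W' \<subseteq> X" using sub by blast
  next
    fix p q assume p: "p \<in> P \<union> A" and q: "q \<in> W'"
    have qW: "q \<in> W" and qA: "q \<notin> A" using q unfolding W'_def by blast+
    show "snd p \<noteq> snd q"
    proof (cases "p \<in> P")
      case True then show ?thesis using dis qW by blast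
    next
      case False
      then have "snd p = c" using p unfolding Ac by blast
      moreover have "snd q \<noteq> c" using qW qA unfolding Ac by blast
      ultimately show ?thesis by simp
    qed
  next
    show "rchain (P \<union> A)" unfolding rchain_def
    proof (intro allI)
      fix e f
      show "rowset (P \<union> A) e \<subseteq> rowset (P \<union> A) f \<or> rowset (P \<union> A) f \<subseteq> rowset (P \<union> A) e"
      proof (cases "e = c \<or> f = c")
        case False then show ?thesis using chP unfolding rP' rchain_def by simp
      next
        case True
        have g: "rowset W c \<subseteq> rowset P g \<or> rowset P g = {}" for g
        proof (cases "g \<in> snd ` P")
          case True then show ?thesis using cross by blast
        next
          case False then show ?thesis unfolding rowset_def by force
        qed
        show ?thesis
        proof (cases "e = c")
          case ec: True
          show ?thesis
          proof (cases "f = c")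
            case True then show ?thesis using ec by simp
          next
            case False then show ?thesis unfolding rP' using ec g[of f] by auto
          qed
        next
          case False
          then have fc: "f = c" using True by simp
          show ?thesis unfolding rP' using False fc g[of e] by auto
        qed
      qed
    qed
  next
    fix e d assume e: "e \<in> snd ` (P \<union> A)"
    show "rowset W' d \<subseteq> rowset (P \<union> A) e"
    proof (cases "e = c")
      case True then show ?thesis using rW'[of d] unfolding rP' by auto
    next
      case False
      then have "e \<in> snd ` P" using e Ac by auto
      then show ?thesis using rW'[of d] cross False unfolding rP' by auto
    qed
  next
    fix R assume R: "R \<subseteq> X \<and> rchain R \<and> P \<union> A \<subseteq> R"
    then have RPW: "R \<subseteq> P \<union> W" using mx by blast
    have rRc: "rowset R c = rowset W c"
    proof
      show "rowset R c \<subseteq> rowset W c" using RPW rPc unfolding rowset_def by blast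
      show "rowset W c \<subseteq> rowset R c" using R unfolding Ac rowset_def by auto
    qed
    show "R \<subseteq> P \<union> A \<union> W'"
    proof
      fix q assume q: "q \<in> R"
      show "q \<in> P \<union> A \<union> W'"
      proof (cases "q \<in> P \<union> A")
        case True then show ?thesis by simp
      next
        case False
        then have qW: "q \<in> W" using q RPW by auto
        obtain a e where qae: "q = (a, e)" by (cases q)
        have eP: "e \<notin> snd ` P" using qW dis qae by fastforce
        have rRe: "rowset R e \<subseteq> rowset W e"
          using RPW eP unfolding rowset_def by force
        have aR: "a \<in> rowset R e" using q qae unfolding rowset_def by simp
        have "a \<in> rowset W c"
        proof (rule ccontr)
          assume na: "a \<notin> rowset W c"
          then have "rowset W c \<subseteq> rowset R e" using R aR rRc unfolding rchain_def by blast
          then have "rowset W c \<subset> rowset W e" using rRe aR na by blast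
          then have lt: "card (rowset W c) < card (rowset W e)" using finr psubset_card_mono by blast
          have "maximal_row_subset W {p \<in> W. snd p = e}"
            unfolding maximal_row_subset_def using qW qae by auto
          then have "card {p \<in> W. snd p = e} \<le> card A" using maxA by blast
          then show False using lt unfolding Ac card_row by simp
        qed
        then show ?thesis using qW False qae unfolding W'_def fstA by auto
      qed
    qed
  qed
  then show ?thesis using t W'_def by simp
qed

lemma invar_reach:
  assumes fin: "finite X" and r: "mcs_step\<^sup>*\<^sup>* ({}, X) s" shows "invar X (fst s) (snd s)"
  using r
proof (induction rule: rtranclp_induct)
  case base then show ?case using invar_init by simp
next
  case (step y z)
  then show ?case using invar_step[OF fin, of "fst y" "snd y" z] by simp
qed

lemma step_dec:
  assumes st: "mcs_step s t" and fin: "finite (snd s)"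
  shows "snd t \<subseteq> snd s \<and> card (snd t) < card (snd s)"
proof -
  from st obtain A where mA: "maximal_row_subset (snd s) A"
    and t: "t = (fst s \<union> A, {p \<in> snd s. p \<notin> A \<and> fst p \<in> fst ` A})"
    unfolding mcs_step_def by auto
  from mA have "A \<noteq> {}" "A \<subseteq> snd s" unfolding maximal_row_subset_def by auto
  then have "snd t \<subset> snd s" using t by auto
  then show ?thesis using fin psubset_card_mono by blast
qed

lemma progress:
  assumes fin: "finite W" and nf: "\<not> mcs_final (P, W)"
  shows "\<exists>t. mcs_step (P, W) t"
proof -
  have Wne: "W \<noteq> {}" using nf unfolding mcs_final_def by simp
  define g where "g = (\<lambda>c. card {p \<in> W. snd p = c})"
  have fs: "finite (g ` snd ` W)" "g ` snd ` W \<noteq> {}" using fin Wne by auto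
  have "Max (g ` snd ` W) \<in> g ` snd ` W" by (rule Max_in[OF fs])
  then obtain c where c: "c \<in> snd ` W" "g c = Max (g ` snd ` W)" by (metis imageE)
  define A where "A = {p \<in> W. snd p = c}"
  have mA: "maximal_row_subset W A" unfolding maximal_row_subset_def A_def using c by auto
  have "card B \<le> card A" if "maximal_row_subset W B" for B
  proof -
    from that have "B \<noteq> {}" unfolding maximal_row_subset_def by blast
    from that obtain e where "B = {p \<in> W. snd p = e}" unfolding maximal_row_subset_def by blast
    then have "e \<in> snd ` W" using \<open>B \<noteq> {}\<close> by auto
    then have "g e \<le> g c" using c Max_ge[OF fs(1)] by auto
    then show ?thesis using \<open>B = _\<close> unfolding g_def A_def by simp
  qed
  then show ?thesis using nf mA unfolding mcs_step_def by auto
qed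

lemma final_ok:
  assumes fin: "finite X" and I: "invar X P W" and fl: "mcs_final (P, W)"
  shows "maximal_cartesian_subset X (mcs_output (P, W))"
proof -
  note II = I[unfolded invar_def]
  note sub = II[THEN conjunct1] and dis = II[THEN conjunct2, THEN conjunct1]
    and chP = II[THEN conjunct2, THEN conjunct2, THEN conjunct1]
    and cross = II[THEN conjunct2, THEN conjunct2, THEN conjunct2, THEN conjunct1]
    and mx = II[THEN conjunct2, THEN conjunct2, THEN conjunct2, THEN conjunct2]
  have finW: "finite W" using sub fin finite_subset by blast
  have out: "mcs_output (P, W) = P \<union> W" unfolding mcs_output_def by simp
  have chW: "rchain W"
  proof (cases "W = {}")
    case True then show ?thesis unfolding rchain_def rowset_def by simp
  next
    case False
    then have "S_x W = S_y W" using fl unfolding mcs_final_def by simp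
    then show ?thesis using sxsy_chain[OF finW] by blast
  qed
  have chPW: "rchain (P \<union> W)" unfolding rchain_def rowset_Un
  proof (intro allI)
    fix e f
    have Wd: "e \<in> snd ` P \<Longrightarrow> rowset W e = {}" for e using dis unfolding rowset_def by force
    have Pd: "e \<notin> snd ` P \<Longrightarrow> rowset P e = {}" for e unfolding rowset_def by force
    show "rowset P e \<union> rowset W e \<subseteq> rowset P f \<union> rowset W f \<or>
          rowset P f \<union> rowset W f \<subseteq> rowset P e \<union> rowset W e"
    proof (cases "e \<in> snd ` P"; cases "f \<in> snd ` P")
      assume "e \<in> snd ` P" "f \<in> snd ` P"
      then show ?thesis using Wd chP unfolding rchain_def by simp
    next
      assume "e \<in> snd ` P" "f \<notin> snd ` P"
      then show ?thesis using Wd Pd cross by simp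
    next
      assume "e \<notin> snd ` P" "f \<in> snd ` P"
      then show ?thesis using Wd Pd cross by simp
    next
      assume "e \<notin> snd ` P" "f \<notin> snd ` P"
      then show ?thesis using Pd chW unfolding rchain_def by simp
    qed
  qed
  have finPW: "finite (P \<union> W)" using sub fin finite_subset by blast
  show ?thesis unfolding maximal_cartesian_subset_def out
  proof (intro conjI)
    show "P \<union> W \<subseteq> X" by (rule sub)
    show "cartesian (P \<union> W)" by (rule chain_cart[OF finPW chPW])
    show "\<not> (\<exists>R'. R' \<subseteq> X \<and> cartesian R' \<and> P \<union> W \<subset> R')"
    proof
      assume "\<exists>R'. R' \<subseteq> X \<and> cartesian R' \<and> P \<union> W \<subset> R'"
      then obtain R where "R \<subseteq> X" "cartesian R" "P \<union> W \<subset> R" by blast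
      then have "R \<subseteq> P \<union> W" using mx cart_chain by blast
      with \<open>P \<union> W \<subset> R\<close> show False by blast
    qed
  qed
qed

theorem mainTheorem7:
  fixes \<Xi> :: "('a::field \<times> 'a) set"
  assumes "finite \<Xi>"
  shows "\<not> (\<exists>f. f 0 = ({}, \<Xi>) \<and> (\<forall>n. mcs_step (f n) (f (Suc n))))
    \<and> (\<forall>s. mcs_step\<^sup>*\<^sup>* ({}, \<Xi>) s \<longrightarrow> mcs_final s \<or> (\<exists>t. mcs_step s t))
    \<and> (\<forall>s. mcs_step\<^sup>*\<^sup>* ({}, \<Xi>) s \<and> mcs_final s \<longrightarrow>
           maximal_cartesian_subset \<Xi> (mcs_output s))"
proof (intro conjI allI impI)
  show "\<not> (\<exists>f. f 0 = ({}, \<Xi>) \<and> (\<forall>n. mcs_step (f n) (f (Suc n))))"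
  proof
    assume "\<exists>f. f 0 = ({}, \<Xi>) \<and> (\<forall>n. mcs_step (f n) (f (Suc n)))"
    then obtain f where f0: "f 0 = ({}, \<Xi>)" and fs: "\<forall>n. mcs_step (f n) (f (Suc n))" by blast
    have "snd (f n) \<subseteq> \<Xi> \<and> card (snd (f n)) + n \<le> card \<Xi>" for n
    proof (induction n)
      case 0 then show ?case using f0 by simp
    next
      case (Suc n)
      have "finite (snd (f n))" using Suc assms finite_subset by blast
      then have "snd (f (Suc n)) \<subseteq> snd (f n) \<and> card (snd (f (Suc n))) < card (snd (f n))"
        using step_dec fs by blast
      then show ?case using Suc.IH by (intro conjI) (blast, linarith)
    qed
    note this[of "Suc (card \<Xi>)", THEN conjunct2]
    then show False by linarith
  qed
next
  fix s assume r: "mcs_step\<^sup>*\<^sup>* ({}, \<Xi>) s"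
  have I: "invar \<Xi> (fst s) (snd s)" using invar_reach[OF assms r] .
  then have "snd s \<subseteq> \<Xi>" unfolding invar_def by (elim conjE) auto
  then have "finite (snd s)" using assms finite_subset by blast
  then show "mcs_final s \<or> (\<exists>t. mcs_step s t)" using progress[of "snd s" "fst s"] by (metis prod.collapse)
next
  fix s assume r: "mcs_step\<^sup>*\<^sup>* ({}, \<Xi>) s \<and> mcs_final s"
  have I: "invar \<Xi> (fst s) (snd s)" using invar_reach[OF assms] r by blast
  show "maximal_cartesian_subset \<Xi> (mcs_output s)"
    using final_ok[OF assms I] r by (metis prod.collapse)
qed

end
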